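(* Let $l,m,n\in\mathbb N$, $f:[l]\to[m]$, $g:[m]\to[n]$ and $H\in G[l]$. Then $(g\circ f)_{H*}=g_{Gf(H)*}\circ f_{H*}$ as maps $C(H)\to C(G(g\circ f)(H))$. Moreover, for every $l\in\mathbb N$ and $H\in G[l]$, $(\mathrm{id}_{[l]})_{H*}=\mathrm{id}_{C(H)}$.
   Context: $\mathbb N=\{0,1,2,\dots\}$, $[l]=\{0,\dots,l-1\}$. $G[l]$ is the set of hypergraphs on $[l]$, i.e. sets of non-empty subsets of $[l]$ (hyperedges); for $f:[l]\to[m]$, $Gf(H)=\{f(X)\mid X\in H\}$. $\mathsf A,\mathsf M$ are finite additive commutative monoids. For finite $X\subset\mathbb N$, $\mathsf A^X$ denotes functions $X\to\mathsf A$ and $\mathsf M^{\mathsf A^X}$ functions $\mathsf A^X\to\mathsf M$, both monoids under pointwise addition. For $\phi:X\to Y$ between finite subsets of $\mathbb N$, $\phi_\star:\mathsf A^X\to\mathsf A^Y$, $\phi_\star(w)(s)=\sum_{r\in X,\phi(r)=s}w(r)$, and $\phi_*:\mathsf M^{\mathsf A^X}\to\mathsf M^{\mathsf A^Y}$, $\phi_*(\varpi)(v)=\sum_{w:\phi_\star(w)=v}\varpi(w)$. A calibration $\varrho$ of $H\in G[l]$ assigns to each $X\in H$ an element $\varrho_X\in\mathsf M^{\mathsf A^X}$; $C(H)$ is the set of calibrations of $H$ (for $H=\emptyset$ it has exactly one element, the empty function). For $f:[l]\to[m]$, the push-forward $f_{H*}:C(H)\to C(Gf(H))$ is $f_{H*}(\varrho)_Y=\sum_{X\in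 H,\,f(X)=Y}(f|_X)_*(\varrho_X)$ for $Y\in Gf(H)$, where $f|_X:X\to f(X)$ is the restriction and the sum is taken in $\mathsf M^{\mathsf A^Y}$. *)

theory Defs
  imports Main
begin

definition hypergraphs :: "nat \<Rightarrow> nat set set set" where
  "hypergraphs l = {H. \<forall>X\<in>H. X \<noteq> {} \<and> X \<subseteq> {..<l}}"

definition Gmap :: "(nat \<Rightarrow> nat) \<Rightarrow> nat set set \<Rightarrow> nat set set" where
  "Gmap f H = (\<lambda>X. f ` X) ` H"

text \<open>A^X: functions X -> A, represented extensionally as functions nat -> A that are 0 off X.\<close>
definition Afuns :: "nat set \<Rightarrow> (nat \<Rightarrow> 'a::zero) set" where
  "Afuns X = {w. \<forall>r. r \<notin> X \<longrightarrow> w r = 0}"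

text \<open>M^(A^X): functions A^X -> M, represented as functions that are 0 off A^X.\<close>
definition Mfuns :: "nat set \<Rightarrow> ((nat \<Rightarrow> 'a::zero) \<Rightarrow> 'm::zero) set" where
  "Mfuns X = {\<rho>. \<forall>w. w \<notin> Afuns X \<longrightarrow> \<rho> w = 0}"

definition pushA :: "nat set \<Rightarrow> nat set \<Rightarrow> (nat \<Rightarrow> nat) \<Rightarrow> (nat \<Rightarrow> 'a::comm_monoid_add) \<Rightarrow> (nat \<Rightarrow> 'a)" where
  "pushA X Y \<phi> w = (\<lambda>s. if s \<in> Y then (\<Sum>r\<in>{r\<in>X. \<phi> r = s}. w r) else 0)"

definition pushM :: "nat set \<Rightarrow> nat set \<Rightarrow> (nat \<Rightarrow> nat) \<Rightarrow>
    ((nat \<Rightarrow> 'a::comm_monoid_add) \<Rightarrow> 'm::comm_monoid_add) \<Rightarrow> ((nat \<Rightarrow> 'a) \<Rightarrow> 'm)" where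
  "pushM X Y \<phi> \<rho> = (\<lambda>v. if v \<in> Afuns Y
       then (\<Sum>w\<in>{w\<in>Afuns X. pushA X Y \<phi> w = v}. \<rho> w) else 0)"

text \<open>Calibrations of H: assignments X |-> rho_X in M^(A^X) for X in H,
  represented extensionally (the zero function off H).\<close>
definition calibrations :: "nat set set \<Rightarrow>
    (nat set \<Rightarrow> (nat \<Rightarrow> 'a::zero) \<Rightarrow> 'm::zero) set" where
  "calibrations H = {\<rho>. (\<forall>X\<in>H. \<rho> X \<in> Mfuns X) \<and> (\<forall>X. X \<notin> H \<longrightarrow> \<rho> X = (\<lambda>_. 0))}"

definition push :: "(nat \<Rightarrow> nat) \<Rightarrow> nat set set \<Rightarrow>
    (nat set \<Rightarrow> (nat \<Rightarrow> 'a::comm_monoid_add) \<Rightarrow> 'm::comm_monoid_add) \<Rightarrow>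
    (nat set \<Rightarrow> (nat \<Rightarrow> 'a) \<Rightarrow> 'm)" where
  "push f H \<rho> = (\<lambda>Y. if Y \<in> Gmap f H
       then (\<lambda>v. \<Sum>X\<in>{X\<in>H. f ` X = Y}. pushM X Y f (\<rho> X) v)
       else (\<lambda>_. 0))"

end

theory Submission
  imports Defs
begin

lemma Afuns_finite:
  assumes "finite X"
  shows "finite (Afuns X :: (nat \<Rightarrow> 'a::{zero,finite}) set)"
proof -
  have "Afuns X = {w::nat\<Rightarrow>'a. \<forall>x. (x \<in> X \<longrightarrow> w x \<in> UNIV) \<and> (x \<notin> X \<longrightarrow> w x = 0)}"
    unfolding Afuns_def by auto
  then show ?thesis using finite_set_of_finite_funs[OF assms, of "UNIV::'a set" 0] by simp
qed

lemma pushA_Afuns: "pushA X Y f w \<in> Afuns Y"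
  unfolding pushA_def Afuns_def by auto

lemma pushA_comp:
  assumes "finite X" "Y = f ` X"
  shows "pushA Y Z g (pushA X Y f w) = pushA X Z (g \<circ> f) w"
proof
  fix s
  show "pushA Y Z g (pushA X Y f w) s = pushA X Z (g \<circ> f) w s"
  proof (cases "s \<in> Z")
    case True
    have "(\<Sum>r\<in>{r\<in>Y. g r = s}. pushA X Y f w r)
        = (\<Sum>r\<in>{r\<in>Y. g r = s}. \<Sum>x\<in>{x\<in>{x\<in>X. g (f x) = s}. f x = r}. w x)"
      by (rule sum.cong) (auto simp: pushA_def intro!: sum.cong)
    also have "\<dots> = (\<Sum>x\<in>{x\<in>X. g (f x) = s}. w x)"
      by (rule sum.group) (use assms in auto)
    finally show ?thesis using True by (simp add: pushA_def)
  qed (simp add: pushA_def)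
qed

lemma pushM_comp:
  fixes \<sigma> :: "(nat \<Rightarrow> 'a::{comm_monoid_add,finite}) \<Rightarrow> 'm::comm_monoid_add"
  assumes "finite X" "Y = f ` X"
  shows "pushM Y Z g (pushM X Y f \<sigma>) = pushM X Z (g \<circ> f) \<sigma>"
proof
  fix v
  show "pushM Y Z g (pushM X Y f \<sigma>) v = pushM X Z (g \<circ> f) \<sigma> v"
  proof (cases "v \<in> Afuns Z")
    case True
    have fY: "finite Y" using assms by simp
    have "(\<Sum>u\<in>{u\<in>Afuns Y. pushA Y Z g u = v}. pushM X Y f \<sigma> u)
      = (\<Sum>u\<in>{u\<in>Afuns Y. pushA Y Z g u = v}.
           \<Sum>w\<in>{w\<in>{w\<in>Afuns X. pushA X Z (g \<circ> f) w = v}. pushA X Y f w = u}. \<sigma> w)"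
      by (rule sum.cong) (auto simp: pushM_def pushA_comp[OF assms] intro!: sum.cong)
    also have "\<dots> = (\<Sum>w\<in>{w\<in>Afuns X. pushA X Z (g \<circ> f) w = v}. \<sigma> w)"
      by (rule sum.group) (use assms Afuns_finite[OF assms(1)] Afuns_finite[OF fY]
           pushA_Afuns pushA_comp[OF assms] in auto)
    finally show ?thesis using True by (simp add: pushM_def)
  qed (simp add: pushM_def)
qed

lemma pushM_sum:
  assumes "finite Y" "finite S"
  shows "pushM Y Z g (\<lambda>u. \<Sum>X\<in>S. F X u) = (\<lambda>v. \<Sum>X\<in>S. pushM Y Z g (F X) v)"
  unfolding pushM_def using assms
  by (auto intro!: ext sum.swap)

lemma pushM_id:
  fixes \<sigma> :: "(nat \<Rightarrow> 'a::{comm_monoid_add,finite}) \<Rightarrow> 'm::comm_monoid_add"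
  assumes "\<sigma> \<in> Mfuns Y"
  shows "pushM Y Y id \<sigma> = \<sigma>"
proof
  fix v
  have e: "pushA Y Y id w = w" if wY: "w \<in> Afuns Y" for w :: "nat \<Rightarrow> 'a"
  proof
    fix s
    note wY
    moreover have "s \<in> Y \<Longrightarrow> {r\<in>Y. id r = s} = {s}" by auto
    ultimately show "pushA Y Y id w s = w s" unfolding pushA_def Afuns_def by auto
  qed
  show "pushM Y Y id \<sigma> v = \<sigma> v"
  proof (cases "v \<in> Afuns Y")
    case True
    then have "{w\<in>Afuns Y. pushA Y Y id w = v} = {v}" using e by auto
    then show ?thesis using True by (simp add: pushM_def)
  qed (use assms in \<open>simp add: pushM_def Mfuns_def\<close>)
qed

theorem proposition3p19:
  fixes l m n :: nat and f g :: "nat \<Rightarrow> nat" and H :: "nat set set"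
  assumes "f ` {..<l} \<subseteq> {..<m}" and "g ` {..<m} \<subseteq> {..<n}" and "H \<in> hypergraphs l"
  shows "(\<forall>\<rho>::nat set \<Rightarrow> (nat \<Rightarrow> 'a::{comm_monoid_add,finite}) \<Rightarrow> 'm::{comm_monoid_add,finite}.
           \<rho> \<in> calibrations H \<longrightarrow> push (g \<circ> f) H \<rho> = push g (Gmap f H) (push f H \<rho>)) \<and>
         (\<forall>k. \<forall>K \<in> hypergraphs k.
           \<forall>\<rho>::nat set \<Rightarrow> (nat \<Rightarrow> 'a::{comm_monoid_add,finite}) \<Rightarrow> 'm::{comm_monoid_add,finite}.
           \<rho> \<in> calibrations K \<longrightarrow> push id K \<rho> = \<rho>)"
proof (intro conjI allI ballI impI)
  fix \<rho> :: "nat set \<Rightarrow> (nat \<Rightarrow> 'a::{comm_monoid_add,finite}) \<Rightarrow> 'm::{comm_monoid_add,finite}"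
  have Hsub: "H \<subseteq> Pow {..<l}" using assms(3) unfolding hypergraphs_def by auto
  have fH: "finite H" using Hsub finite_subset by blast
  have fX: "\<And>X. X \<in> H \<Longrightarrow> finite X" using Hsub finite_subset by blast
  have GG: "Gmap g (Gmap f H) = Gmap (g \<circ> f) H" unfolding Gmap_def by (auto simp: image_comp)
  show "push (g \<circ> f) H \<rho> = push g (Gmap f H) (push f H \<rho>)"
  proof
    fix Z
    show "push (g \<circ> f) H \<rho> Z = push g (Gmap f H) (push f H \<rho>) Z"
    proof (cases "Z \<in> Gmap (g \<circ> f) H")
      case True
      have "(\<lambda>v. \<Sum>Y\<in>{Y\<in>Gmap f H. g ` Y = Z}. pushM Y Z g (push f H \<rho> Y) v)
          = (\<lambda>v. \<Sum>Y\<in>{Y\<in>Gmap f H. g ` Y = Z}.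
               \<Sum>X\<in>{X\<in>{X\<in>H. (g \<circ> f) ` X = Z}. f ` X = Y}. pushM X Z (g \<circ> f) (\<rho> X) v)"
      proof (intro ext sum.cong refl)
        fix v Y assume Y: "Y \<in> {Y\<in>Gmap f H. g ` Y = Z}"
        then obtain X0 where "X0 \<in> H" "Y = f ` X0" unfolding Gmap_def by auto
        then have fY: "finite Y" using fX by auto
        have "pushM Y Z g (push f H \<rho> Y) v
            = (\<Sum>X\<in>{X\<in>H. f ` X = Y}. pushM Y Z g (pushM X Y f (\<rho> X)) v)"
          using Y fH by (simp add: push_def pushM_sum[OF fY])
        also have "\<dots> = (\<Sum>X\<in>{X\<in>{X\<in>H. (g \<circ> f) ` X = Z}. f ` X = Y}. pushM X Z (g \<circ> f) (\<rho> X) v)"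
          apply (rule sum.cong)
          using Y apply (auto simp: image_comp)[1]
          using fX by (auto simp: pushM_comp[OF _ refl])
        finally show "pushM Y Z g (push f H \<rho> Y) v = \<dots>" .
      qed
      also have "\<dots> = (\<lambda>v. \<Sum>X\<in>{X\<in>H. (g \<circ> f) ` X = Z}. pushM X Z (g \<circ> f) (\<rho> X) v)"
        by (intro ext sum.group) (use fH in \<open>auto simp: Gmap_def image_comp\<close>)
      finally show ?thesis using True GG by (simp add: push_def)
    next
      case False
      then show ?thesis using GG by (simp add: push_def)
    qed
  qed
next
  fix k K and \<rho> :: "nat set \<Rightarrow> (nat \<Rightarrow> 'a::{comm_monoid_add,finite}) \<Rightarrow> 'm::{comm_monoid_add,finite}"
  assume K: "K \<in> hypergraphs k" and r: "\<rho> \<in> calibrations K"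
  show "push id K \<rho> = \<rho>"
  proof
    fix Y
    show "push id K \<rho> Y = \<rho> Y"
    proof (cases "Y \<in> K")
      case True
      then have "{X\<in>K. id ` X = Y} = {Y}" by auto
      moreover have "\<rho> Y \<in> Mfuns Y" using True r by (auto simp: calibrations_def)
      ultimately show ?thesis using True pushM_id[of "\<rho> Y" Y]
        by (auto simp: push_def Gmap_def)
    next
      case False
      then show ?thesis using r by (auto simp: push_def Gmap_def calibrations_def)
    qed
  qed
qed

end
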